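(* For all integers $n,k$ with $0\leqslant k\leqslant n-1$, \begin{align*} \sum_{m=k}^{n-1}(-1)^{n+m}\frac{2m+1}{(n-m)(n+m+1)} &= -\psi(2n+1)+\psi(n+k+1)+\psi(n+1)-\psi(n-k+1)\\ &\quad -\psi\left(\left\lfloor\frac{n+k}{2}\right\rfloor+1\right) +\psi\left(\left\lfloor\frac{n-k}{2}\right\rfloor+1\right). \end{align*}
   Context: $\psi=\Gamma'/\Gamma$ is the digamma function; $\lfloor x\rfloor$ denotes the greatest integer not exceeding $x$. *)

theory Defs
  imports "HOL-Analysis.Analysis"
begin

end

theory Submission imports Defs begin

definition F :: "nat \<Rightarrow> nat \<Rightarrow> real" where
 "F n k = - harm (2*n) + harm (n+k) + harm n - harm (n-k) - harm ((n+k) div 2) + harm ((n-k) div 2)"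

lemma harmS: "harm (Suc x) = harm x + 1 / (real x + 1)"
  by (simp add: harm_Suc inverse_eq_divide add.commute)

lemma step:
  "F (k + Suc d) k = (-1)^(k + Suc d + k) * (2 * real k + 1) /
     ((real (k + Suc d) - real k) * (real (k + Suc d) + real k + 1)) + F (k + Suc d) (Suc k)"
proof -
  have h1: "harm (k + Suc d + Suc k) = harm (k + Suc d + k) + 1 / (2*real k + real d + 2)"
    using harmS[of "k + Suc d + k"] by (simp add: algebra_simps)
  have h2: "harm (k + Suc d - k) = harm (k + Suc d - Suc k) + 1 / (real d + 1)"
    using harmS[of d] by (simp add: algebra_simps)
  have den: "(real (k + Suc d) - real k) * (real (k + Suc d) + real k + 1) = (real d + 1) * (2*real k + real d + 2)"
    by (simp add: algebra_simps)
  show ?thesis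
  proof (cases "even d")
    case True
    then obtain e where d: "d = 2*e" by blast
    have a: "(k + Suc d + k) div 2 = k + e" "(k + Suc d + Suc k) div 2 = Suc (k + e)"
       "(k + Suc d - k) div 2 = e" "(k + Suc d - Suc k) div 2 = e" using d by auto
    have h3: "harm (Suc (k + e)) = harm (k+e) + 2 / (2*real k + real d + 2)"
      using harmS[of "k+e"] d by (simp add: field_simps)
    have p: "(-1::real)^(k + Suc d + k) = -1" using d by (simp add: power_add)
    have t: "(-1::real) * (2 * real k + 1) / ((real d + 1) * (2*real k + real d + 2))
        = 1 / (2*real k + real d + 2) - 1 / (real d + 1)"
      by (simp add: field_simps)
    show ?thesis unfolding F_def a p den t using h1 h2 h3 by linarith
  next
    case False
    then obtain e where d: "d = 2*e+1" by (metis oddE)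
    have a: "(k + Suc d + k) div 2 = Suc (k + e)" "(k + Suc d + Suc k) div 2 = Suc (k + e)"
       "(k + Suc d - k) div 2 = Suc e" "(k + Suc d - Suc k) div 2 = e" using d by auto
    have h3: "harm (Suc e) = harm e + 2 / (real d + 1)"
      using harmS[of "e"] d by (simp add: field_simps)
    have p: "(-1::real)^(k + Suc d + k) = 1" using d by (simp add: power_add)
    have t: "(1::real) * (2 * real k + 1) / ((real d + 1) * (2*real k + real d + 2))
        = 1 / (real d + 1) - 1 / (2*real k + real d + 2)"
      by (simp add: field_simps)
    show ?thesis unfolding F_def a p den t using h1 h2 h3 by linarith
  qed
qed

lemma key: "(\<Sum>m\<in>{k..<k+d}. (-1)^(k+d+m) * (2 * real m + 1) /
     ((real (k + d) - real m) * (real (k + d) + real m + 1))) = F (k+d) k"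
proof (induction d arbitrary: k)
  case 0
  have a: "k + 0 - k = 0" "(k + 0 + k) div 2 = k" "2 * (k + 0) = k + 0 + k" by auto
  show ?case unfolding F_def a by simp
next
  case (Suc d)
  have s: "{k..<k+Suc d} = insert k {Suc k..<Suc k + d}" by auto
  have e: "Suc k + d = k + Suc d" by simp
  have fin: "finite {Suc k..<Suc k + d}" "k \<notin> {Suc k..<Suc k + d}" by auto
  show ?case unfolding s sum.insert[OF fin] using Suc[of "Suc k"] step[of k d]
    unfolding e by linarith
qed


lemma Dg: "Digamma (of_int (int x + 1) :: real) = harm x - euler_mascheroni"
proof -
  have "(of_int (int x + 1) :: real) = of_nat (Suc x)" by simp
  then show ?thesis using Digamma_of_nat[of x] by (simp add: add.commute)
qed

theorem mainTheorem4:
  fixes n k :: int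
  assumes "0 \<le> k" and "k \<le> n - 1"
  shows "(\<Sum>m\<in>{k..n-1}. (-1) ^ nat (n + m) * (2 * of_int m + 1) /
            ((of_int n - of_int m) * (of_int n + of_int m + 1)) :: real)
       = - Digamma (of_int (2*n+1)) + Digamma (of_int (n+k+1)) + Digamma (of_int (n+1))
         - Digamma (of_int (n-k+1))
         - Digamma (of_int ((n+k) div 2 + 1)) + Digamma (of_int ((n-k) div 2 + 1))"
proof -
  obtain K where K: "k = int K" using assms(1) nonneg_eq_int by blast
  define D where "D = nat (n - k)"
  have D: "n = int K + int D" using assms K unfolding D_def by simp
  define N where "N = K + D"
  have nN: "n = int N" using D N_def by simp
  have set: "{k..n-1} = int ` {K..<N}"
    unfolding K nN image_int_atLeastLessThan by auto
  have L: "(\<Sum>m\<in>{k..n-1}. (-1) ^ nat (n + m) * (2 * of_int m + 1) /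
            ((of_int n - of_int m) * (of_int n + of_int m + 1)) :: real)
     = (\<Sum>m\<in>{K..<K+D}. (-1)^(K+D+m) * (2 * real m + 1) /
     ((real (K + D) - real m) * (real (K + D) + real m + 1)))"
    unfolding set by (subst sum.reindex) (auto simp: nN N_def nat_add_distrib)
  have e1: "2*n+1 = int (2*N) + 1" "n+k+1 = int (N+K) + 1" "n+1 = int N + 1"
     "n-k+1 = int (N-K) + 1" "(n+k) div 2 + 1 = int ((N+K) div 2) + 1"
     "(n-k) div 2 + 1 = int ((N-K) div 2) + 1"
    using nN K N_def by (auto simp: zdiv_int)
  show ?thesis unfolding L key e1 Dg by (simp add: F_def N_def)
qed

end
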